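(* Let $1\leq\delta\leq k$, let $V=\mathbb{F}_{q^k}\times\mathbb{F}_{q^k}$ viewed as a $2k$-dimensional $\mathbb{F}_q$-space, and let $\mathcal{G}=\mathcal{G}_{2k,k,\delta}$ be the set of all $\mathbb{F}_q$-subspaces $$G(a_0,\dots,a_{k-\delta})=\Big\{\big(x,\textstyle\sum_{i=0}^{k-\delta}a_ix^{q^i}\big):x\in\mathbb{F}_{q^k}\Big\},\qquad a_0,\dots,a_{k-\delta}\in\mathbb{F}_{q^k}.$$ Let $\perp$ denote orthogonality with respect to the nondegenerate $\mathbb{F}_q$-bilinear form $\langle(a,b),(x,y)\rangle=\mathrm{Tr}(ax+by)$, where $\mathrm{Tr}(z)=z+z^q+\dots+z^{q^{k-1}}$. Then there is an $\mathbb{F}_q$-linear bijection $\phi\colon V\to V$ with $\phi(X^\perp)\in\mathcal{G}$ for all $X\in\mathcal{G}$ and $\{\phi(X^\perp):X\in\mathcal{G}\}=\mathcal{G}$; consequently $\mathcal{G}$ is invariant under a correlation of the projective geometry $\mathrm{PG}(V)$. Moreover, every correlation of $\mathrm{PG}(V)$ mapping $\mathcal{G}$ onto itself fixes the subspace $S=\{0\}\times\mathbb{F}_{q^k}$.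
   Context: A correlation of $\mathrm{PG}(V)$ is an inclusion-reversing bijection of the set of subspaces of $V$ induced by a semilinear map composed with taking orthogonal complements (equivalently, an inclusion-reversing bijection of the subspace lattice). Each element of $\mathcal{G}$ is a $k$-dimensional subspace. *)

theory Defs
  imports Main "HOL-Computational_Algebra.Primes"
begin

text \<open>The big field F_{q^k} is a finite field type 'a with CARD('a) = q^k;
  the subfield F_q is the set of fixed points of the q-th power map.\<close>

definition Fq :: "nat \<Rightarrow> 'a::{finite,field} set" where
  "Fq q = {c. c ^ q = c}"

definition vsmult :: "'a::field \<Rightarrow> 'a \<times> 'a \<Rightarrow> 'a \<times> 'a" where
  "vsmult c v = (c * fst v, c * snd v)"

definition vadd :: "'a::field \<times> 'a \<Rightarrow> 'a \<times> 'a \<Rightarrow> 'a \<times> 'a" where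
  "vadd u v = (fst u + fst v, snd u + snd v)"

definition fq_subspace :: "nat \<Rightarrow> ('a::{finite,field} \<times> 'a) set \<Rightarrow> bool" where
  "fq_subspace q U \<longleftrightarrow> (0, 0) \<in> U \<and> (\<forall>u\<in>U. \<forall>w\<in>U. vadd u w \<in> U)
     \<and> (\<forall>c\<in>Fq q. \<forall>u\<in>U. vsmult c u \<in> U)"

definition fq_linear :: "nat \<Rightarrow> ('a::{finite,field} \<times> 'a \<Rightarrow> 'a \<times> 'a) \<Rightarrow> bool" where
  "fq_linear q f \<longleftrightarrow> (\<forall>u w. f (vadd u w) = vadd (f u) (f w))
     \<and> (\<forall>c\<in>Fq q. \<forall>u. f (vsmult c u) = vsmult c (f u))"

definition trace :: "nat \<Rightarrow> nat \<Rightarrow> 'a::field \<Rightarrow> 'a" where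
  "trace q k z = (\<Sum>i<k. z ^ (q ^ i))"

definition bform :: "nat \<Rightarrow> nat \<Rightarrow> 'a::field \<times> 'a \<Rightarrow> 'a \<times> 'a \<Rightarrow> 'a" where
  "bform q k u v = trace q k (fst u * fst v + snd u * snd v)"

definition perp :: "nat \<Rightarrow> nat \<Rightarrow> ('a::field \<times> 'a) set \<Rightarrow> ('a \<times> 'a) set" where
  "perp q k X = {v. \<forall>u\<in>X. bform q k u v = 0}"

definition gsub :: "nat \<Rightarrow> nat \<Rightarrow> nat \<Rightarrow> (nat \<Rightarrow> 'a::field) \<Rightarrow> ('a \<times> 'a) set" where
  "gsub q k \<delta> a = {(x, \<Sum>i\<le>k - \<delta>. a i * x ^ (q ^ i)) | x. True}"

definition Gcode :: "nat \<Rightarrow> nat \<Rightarrow> nat \<Rightarrow> ('a::field \<times> 'a) set set" where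
  "Gcode q k \<delta> = {gsub q k \<delta> a | a. True}"

definition subspaces :: "nat \<Rightarrow> ('a::{finite,field} \<times> 'a) set set" where
  "subspaces q = {U. fq_subspace q U}"

definition correlation :: "nat \<Rightarrow> (('a::{finite,field} \<times> 'a) set \<Rightarrow> ('a \<times> 'a) set) \<Rightarrow> bool" where
  "correlation q c \<longleftrightarrow> bij_betw c (subspaces q) (subspaces q)
     \<and> (\<forall>U\<in>subspaces q. \<forall>W\<in>subspaces q. U \<subseteq> W \<longleftrightarrow> c W \<subseteq> c U)"

end

theory Submission imports Defs "HOL-Number_Theory.Number_Theory" "HOL-Computational_Algebra.Polynomial"
begin

definition polyf :: "nat \<Rightarrow> nat \<Rightarrow> nat \<Rightarrow> (nat \<Rightarrow> 'a::field) \<Rightarrow> 'a \<Rightarrow> 'a" where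
  "polyf q k \<delta> a x = (\<Sum>i\<le>k - \<delta>. a i * x ^ (q ^ i))"

definition adj :: "nat \<Rightarrow> nat \<Rightarrow> nat \<Rightarrow> (nat \<Rightarrow> 'a::field) \<Rightarrow> 'a \<Rightarrow> 'a" where
  "adj q k \<delta> a b = (\<Sum>i\<le>k - \<delta>. (a i * b) ^ (q ^ (k - i)))"

definition phi :: "nat \<Rightarrow> nat \<Rightarrow> 'a::field \<times> 'a \<Rightarrow> 'a \<times> 'a" where
  "phi q \<delta> v = (snd v ^ (q ^ \<delta>), - fst v)"

definition vext :: "nat \<Rightarrow> ('a::{finite,field} \<times> 'a) set \<Rightarrow> 'a \<times> 'a \<Rightarrow> ('a \<times> 'a) set" where
  "vext q W v = {vadd w (vsmult c v) | w c. w \<in> W \<and> c \<in> Fq q}"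

definition isA :: "'b set set \<Rightarrow> 'b set set \<Rightarrow> 'b set \<Rightarrow> bool" where
  "isA Sb G W = (\<forall>X\<in>G. \<forall>Z\<in>Sb. Z \<subseteq> W \<longrightarrow> Z \<subseteq> X \<longrightarrow> (\<forall>Z'\<in>Sb. Z \<subseteq> Z'))"

definition isB :: "'b set set \<Rightarrow> 'b set set \<Rightarrow> 'b set \<Rightarrow> bool" where
  "isB Sb G W = (\<forall>Y\<in>G. \<forall>Z\<in>Sb. W \<subseteq> Z \<longrightarrow> Y \<subseteq> Z \<longrightarrow> (\<forall>Z'\<in>Sb. Z' \<subseteq> Z))"

lemma corr_least:
  fixes c :: "'b set \<Rightarrow> 'b set"
  assumes bij: "bij_betw c Sb Sb"
    and ord: "\<And>U W. U \<in> Sb \<Longrightarrow> W \<in> Sb \<Longrightarrow> U \<subseteq> W \<longleftrightarrow> c W \<subseteq> c U"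
    and GS: "G \<subseteq> Sb" and cG: "c ` G = G" and S: "S \<in> Sb"
    and AS: "isA Sb G S" and maxA: "\<And>W. W \<in> Sb \<Longrightarrow> isA Sb G W \<Longrightarrow> W \<subseteq> S"
  shows "isB Sb G (c S)" and "\<And>W. W \<in> Sb \<Longrightarrow> isB Sb G W \<Longrightarrow> c S \<subseteq> W"
proof -
  have cin: "\<And>U. U \<in> Sb \<Longrightarrow> c U \<in> Sb" using bij bij_betw_apply by metis
  have pre: "\<And>T. T \<in> Sb \<Longrightarrow> \<exists>U\<in>Sb. T = c U" using bij unfolding bij_betw_def by blast
  show "isB Sb G (c S)" unfolding isB_def
  proof (intro ballI impI)
    fix Y Z Z' assume Y: "Y \<in> G" and Z: "Z \<in> Sb" and h1: "c S \<subseteq> Z" and h2: "Y \<subseteq> Z" and Z': "Z' \<in> Sb"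
    obtain X where X: "X \<in> G" "Y = c X" using Y cG by blast
    obtain Z0 where Z0: "Z0 \<in> Sb" "Z = c Z0" using pre[OF Z] by blast
    obtain Z1 where Z1: "Z1 \<in> Sb" "Z' = c Z1" using pre[OF Z'] by blast
    have "Z0 \<subseteq> S" using ord[OF Z0(1) S] h1 Z0 by simp
    moreover have "Z0 \<subseteq> X" using ord[OF Z0(1), of X] GS X h2 Z0 by auto
    ultimately have "Z0 \<subseteq> Z1" using AS X Z0 Z1 unfolding isA_def by blast
    thus "Z' \<subseteq> Z" using ord[OF Z0(1) Z1(1)] Z0 Z1 by simp
  qed
  fix W assume W: "W \<in> Sb" and BW: "isB Sb G W"
  obtain W0 where W0: "W0 \<in> Sb" "W = c W0" using pre[OF W] by blast
  have "isA Sb G W0" unfolding isA_def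
  proof (intro ballI impI)
    fix X Z Z' assume X: "X \<in> G" and Z: "Z \<in> Sb" and h1: "Z \<subseteq> W0" and h2: "Z \<subseteq> X" and Z': "Z' \<in> Sb"
    have "c X \<in> G" using cG X by blast
    moreover have "W \<subseteq> c Z" using ord[OF Z W0(1)] h1 W0 by simp
    moreover have "c X \<subseteq> c Z" using ord[OF Z, of X] GS X h2 by auto
    ultimately have "c Z' \<subseteq> c Z" using BW cin[OF Z] cin[OF Z'] unfolding isB_def by blast
    thus "Z \<subseteq> Z'" using ord[OF Z Z'] by simp
  qed
  hence "W0 \<subseteq> S" using maxA W0 by blast
  thus "c S \<subseteq> W" using ord[OF W0(1) S] W0 by simp
qed

lemma sum_atMost_rev: "(\<Sum>i\<le>(n::nat). f i) = (\<Sum>j\<le>n. f (n - j))"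
  by (rule sum.reindex_bij_witness[of _ "\<lambda>j. n-j" "\<lambda>i. n-i"]) auto

lemma gsub_polyf: "gsub q k \<delta> a = {(x, polyf q k \<delta> a x) | x. True}"
  by (simp add: gsub_def polyf_def)

lemma vadd_simp[simp]: "vadd (a, b) (c, d) = (a + c, b + d)" by (simp add: vadd_def)
lemma vsmult_simp[simp]: "vsmult c (a, b) = (c * a, c * b)" by (simp add: vsmult_def)
lemma bform_simp: "bform q k (a, b) (c, d) = trace q k (a * c + b * d)" by (simp add: bform_def)

context
  fixes q k p m :: nat
  assumes p: "prime p" and m: "m > 0" and q: "q = p^m"
    and cardF: "card (UNIV :: 'a::{finite,field} set) = q^k" and k: "k \<ge> 1"
begin

lemma CHAR_eq: "CHAR('a) = p"
proof -
  have "CHAR('a) > 0" by (rule finite_imp_CHAR_pos) simp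
  hence pc: "prime CHAR('a)" by (rule prime_CHAR_semidom)
  have "CHAR('a) dvd p ^ (m*k)" using CHAR_dvd_CARD[where 'a='a] cardF q by (simp add: power_mult)
  hence "CHAR('a) dvd p" using pc prime_dvd_power by blast
  thus ?thesis using pc p primes_dvd_imp_eq by blast
qed

lemma q_ge2: "q \<ge> 2"
proof -
  have "p \<ge> 2" using p by (simp add: prime_ge_2_nat)
  moreover have "p \<le> p^m" using m p by (intro self_le_power) (auto simp: Suc_leI prime_gt_0_nat)
  ultimately show ?thesis using q by simp
qed

lemma frob_add: "((x::'a) + y) ^ (q^i) = x^(q^i) + y^(q^i)"
  by (rule freshmans_dream'[where n="m*i"]) (auto simp: CHAR_eq p q power_mult)

lemma frob_sum: "(sum (f::'b \<Rightarrow> 'a) A) ^ (q^i) = sum (\<lambda>j. f j ^ (q^i)) A"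
  by (rule freshmans_dream_sum'[where n="m*i"]) (auto simp: CHAR_eq p q power_mult)

lemma frob_neg: "(-(x::'a)) ^ (q^i) = - (x^(q^i))"
proof -
  have "(x + -x) ^ (q^i) = 0" using q_ge2 by simp
  thus ?thesis by (simp only: frob_add) (simp add: add_eq_0_iff2)
qed

lemma frob_diff: "((x::'a) - y) ^ (q^i) = x^(q^i) - y^(q^i)"
  using frob_add[of x "-y" i] frob_neg[of y i] by simp

lemma pow_card: "(x::'a) ^ (q^k) = x"
proof (cases "x = 0")
  case False
  have "x * (\<Prod>y\<in>UNIV-{0}. x * y) = x * x ^ (card (UNIV :: 'a set) - 1) * \<Prod>(UNIV-{0})"
    by (simp add: prod.distrib mult_ac)
  also have "x * x ^ (card (UNIV :: 'a set) - 1) = x ^ Suc (card (UNIV :: 'a set) - 1)"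
    by (subst power_Suc) auto
  also have "Suc (card (UNIV :: 'a set) - 1) = card (UNIV :: 'a set)"
    using finite_UNIV_card_ge_0[where ?'a = 'a] by simp
  also have "(\<Prod>y\<in>UNIV-{0}. x * y) = (\<Prod>y\<in>UNIV-{0}. y)"
    by (rule prod.reindex_bij_witness[of _ "\<lambda>y. y / x" "\<lambda>y. x * y"]) (use False in auto)
  finally show ?thesis
    by (simp add: cardF)
qed (use q_ge2 in auto)

lemma pow_qkn: "(x::'a) ^ (q^(k*n)) = x"
proof (induction n)
  case (Suc n)
  have "x ^ (q^(k*Suc n)) = (x ^ (q^(k*n))) ^ (q^k)"
    by (simp add: power_add power_mult[symmetric] mult.commute)
  thus ?case using Suc pow_card by simp
qed simp

lemma pow_pow: "((x::'a) ^ (q^i)) ^ (q^j) = x ^ (q^(i+j))"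
  by (simp add: power_mult[symmetric] power_add)

lemma frob_surj: "\<exists>b::'a. b ^ (q^e) = y"
proof -
  have "e \<le> k*e" using k by simp
  hence "(y ^ (q^(k*e - e))) ^ (q^e) = y" using pow_qkn[of y e] by (simp add: pow_pow)
  thus ?thesis by blast
qed

lemma frob_inj: "((x::'a) ^ (q^e) = y ^ (q^e)) = (x = y)"
proof
  assume "x ^ (q^e) = y ^ (q^e)"
  hence "(x - y) ^ (q^e) = 0" by (simp add: frob_diff)
  thus "x = y" by simp
qed simp


lemma Fq_pow: "(c::'a) \<in> Fq q \<Longrightarrow> c ^ (q^i) = c"
proof (induction i)
  case (Suc i)
  have "c ^ (q^Suc i) = (c^(q^i))^q" by (simp add: power_mult[symmetric] mult.commute)
  thus ?case using Suc by (simp add: Fq_def)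
qed simp

lemma Fq_0: "(0::'a) \<in> Fq q" using q_ge2 by (simp add: Fq_def)
lemma Fq_1: "(1::'a) \<in> Fq q" by (simp add: Fq_def)
lemma Fq_add: "(a::'a) \<in> Fq q \<Longrightarrow> b \<in> Fq q \<Longrightarrow> a + b \<in> Fq q"
  using frob_add[of a b 1] by (simp add: Fq_def)
lemma Fq_mult: "(a::'a) \<in> Fq q \<Longrightarrow> b \<in> Fq q \<Longrightarrow> a * b \<in> Fq q"
  by (simp add: Fq_def power_mult_distrib)
lemma Fq_neg: "(a::'a) \<in> Fq q \<Longrightarrow> - a \<in> Fq q"
  using frob_neg[of a 1] by (simp add: Fq_def)
lemma Fq_diff: "(a::'a) \<in> Fq q \<Longrightarrow> b \<in> Fq q \<Longrightarrow> a - b \<in> Fq q"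
  using frob_diff[of a b 1] by (simp add: Fq_def)
lemma Fq_inv: "(a::'a) \<in> Fq q \<Longrightarrow> inverse a \<in> Fq q"
  by (simp add: Fq_def power_inverse)
lemma Fq_div: "(a::'a) \<in> Fq q \<Longrightarrow> b \<in> Fq q \<Longrightarrow> a / b \<in> Fq q"
  by (simp add: divide_inverse Fq_mult Fq_inv)

abbreviation tr :: "'a \<Rightarrow> 'a" where "tr \<equiv> trace q k"

lemma tr_add: "tr ((x::'a) + y) = tr x + tr y"
  by (simp add: trace_def frob_add sum.distrib)
lemma tr_0: "tr (0::'a) = 0"
  using q_ge2 by (simp add: trace_def power_0_left)
lemma tr_neg: "tr (-(x::'a)) = - tr x"
  by (simp add: trace_def frob_neg sum_negf)
lemma tr_sum: "tr (sum (f::'b\<Rightarrow>'a) A) = sum (\<lambda>i. tr (f i)) A"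
  by (induction A rule: infinite_finite_induct) (auto simp: tr_0 tr_add)
lemma tr_scal: "(c::'a) \<in> Fq q \<Longrightarrow> tr (c * x) = c * tr x"
  by (simp add: trace_def power_mult_distrib Fq_pow sum_distrib_left)

lemma tr_frob1: "tr ((z::'a) ^ q) = tr z"
proof -
  have "tr (z^q) = (\<Sum>i<k. z ^ (q ^ Suc i))"
    unfolding trace_def by (intro sum.cong) (auto simp: power_mult[symmetric] mult.commute)
  also have "\<dots> = (\<Sum>i<Suc k. z ^ (q ^ i)) - z"
    by (subst sum.lessThan_Suc_shift) simp
  also have "\<dots> = tr z + z ^ (q^k) - z" by (simp add: trace_def)
  finally show ?thesis by (simp add: pow_card)
qed

lemma tr_frob: "tr ((z::'a) ^ (q^i)) = tr z"
proof (induction i)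
  case (Suc i)
  have "z ^ (q^Suc i) = (z^(q^i))^q" by (simp add: power_mult[symmetric] mult.commute)
  thus ?case using Suc tr_frob1 by simp
qed simp

lemma tr_Fq: "tr (z::'a) \<in> Fq q"
  using frob_sum[of "\<lambda>i. z ^ (q^i)" "{..<k}" 1] tr_frob1[of z]
  by (simp add: Fq_def trace_def power_mult[symmetric] mult.commute)

lemma tr_nonzero: "\<exists>z::'a. tr z \<noteq> 0"
proof (rule ccontr)
  assume all0: "\<not> (\<exists>z::'a. tr z \<noteq> 0)"
  define P :: "'a poly" where "P = (\<Sum>i<k. monom 1 (q^i))"
  have polyP: "poly P z = tr z" for z
    by (simp add: P_def trace_def poly_sum poly_monom)
  have coeffP: "coeff P n = (\<Sum>i<k. if q^i = n then 1 else 0)" for n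
    by (simp add: P_def coeff_sum coeff_monom)
  have inj: "q^i = q^j \<longleftrightarrow> i = j" for i j using q_ge2 by (simp add: power_inject_exp)
  have "coeff P (q^(k-1)) = (\<Sum>i<k. if i = k-1 then 1 else 0)"
    unfolding coeffP by (intro sum.cong) (auto simp: inj)
  also have "\<dots> = 1" using k by simp
  finally have "P \<noteq> 0" by auto
  have "degree P \<le> q^(k-1)"
  proof (rule degree_le, intro allI impI)
    fix n assume n: "q^(k-1) < n"
    have "\<forall>i<k. q^i \<noteq> n"
    proof (intro allI impI)
      fix i assume "i < k"
      hence "q^i \<le> q^(k-1)" using q_ge2 by (intro power_increasing) auto
      thus "q^i \<noteq> n" using n by auto
    qed
    thus "coeff P n = 0" unfolding coeffP by simp
  qed
  moreover have "card {x. poly P x = 0} \<le> degree P" by (rule card_poly_roots_bound) fact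
  moreover have "{x. poly P x = 0} = UNIV" using all0 polyP by auto
  ultimately have "q^k \<le> q^(k-1)" using cardF by simp
  moreover have "q^(k-1) < q^k" using q_ge2 k by (intro power_strict_increasing) auto
  ultimately show False by simp
qed

lemma nondeg: "(\<forall>x::'a. tr (x * z) = 0) \<Longrightarrow> z = 0"
proof (rule ccontr)
  assume a: "\<forall>x::'a. tr (x * z) = 0" and z: "z \<noteq> 0"
  obtain w :: 'a where "tr w \<noteq> 0" using tr_nonzero by blast
  moreover have "tr ((w/z) * z) = 0" using a by blast
  ultimately show False using z by simp
qed


lemma bform_add1: "bform q k (vadd u u') (v::'a\<times>'a) = bform q k u v + bform q k u' v"
  by (cases u; cases u'; cases v) (simp add: bform_simp tr_add[symmetric] algebra_simps)
lemma bform_add2: "bform q k v (vadd u u') = bform q k (v::'a\<times>'a) u + bform q k v u'"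
  by (cases u; cases u'; cases v) (simp add: bform_simp tr_add[symmetric] algebra_simps)
lemma bform_smult1: "c \<in> Fq q \<Longrightarrow> bform q k (vsmult c u) (v::'a\<times>'a) = c * bform q k u v"
  by (cases u; cases v) (simp add: bform_simp tr_scal[symmetric] algebra_simps)
lemma bform_smult2: "c \<in> Fq q \<Longrightarrow> bform q k v (vsmult c u) = c * bform q k (v::'a\<times>'a) u"
  by (cases u; cases v) (simp add: bform_simp tr_scal[symmetric] algebra_simps)
lemma bform_comm: "bform q k u (v::'a\<times>'a) = bform q k v u"
  by (cases u; cases v) (simp add: bform_simp algebra_simps)
lemma bform_Fq: "bform q k u (v::'a\<times>'a) \<in> Fq q"
  by (simp add: bform_def tr_Fq)

lemma perp_subspace: "fq_subspace q (perp q k (X::('a\<times>'a) set))"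
proof -
  have "bform q k u ((0,0)::'a\<times>'a) = 0" for u by (cases u) (simp add: bform_simp tr_0)
  thus ?thesis
    unfolding fq_subspace_def perp_def by (simp add: bform_add2 bform_smult2)
qed

lemma perp_antimono: "X \<subseteq> Y \<Longrightarrow> perp q k Y \<subseteq> perp q k (X::('a\<times>'a) set)"
  by (auto simp: perp_def)

lemma perp_perp_sup: "X \<subseteq> perp q k (perp q k (X::('a\<times>'a) set))"
  by (auto simp: perp_def bform_comm)

lemma polyf_0: "polyf q k \<delta> a (0::'a) = 0"
  using q_ge2 by (simp add: polyf_def power_0_left)

lemma polyf_add: "polyf q k \<delta> a ((x::'a) + y) = polyf q k \<delta> a x + polyf q k \<delta> a y"
  by (simp add: polyf_def frob_add sum.distrib algebra_simps)

lemma polyf_smult: "c \<in> Fq q \<Longrightarrow> polyf q k \<delta> a ((c::'a) * x) = c * polyf q k \<delta> a x"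
  by (simp add: polyf_def power_mult_distrib Fq_pow sum_distrib_left algebra_simps)

lemma gsub_subspace: "fq_subspace q (gsub q k \<delta> (a::nat\<Rightarrow>'a))"
proof -
  have 1: "(0, 0) \<in> gsub q k \<delta> a" unfolding gsub_polyf using polyf_0[of \<delta> a] by force
  have 2: "vadd u w \<in> gsub q k \<delta> a" if hu: "u \<in> gsub q k \<delta> a" and hw: "w \<in> gsub q k \<delta> a" for u w
  proof -
    obtain x where "u = (x, polyf q k \<delta> a x)"
      using hu unfolding gsub_polyf by blast
    moreover obtain y where "w = (y, polyf q k \<delta> a y)"
      using hw unfolding gsub_polyf by blast
    ultimately
    have "vadd u w = (x + y, polyf q k \<delta> a (x + y))" by (simp add: polyf_add)
    thus ?thesis unfolding gsub_polyf by blast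
  qed
  have 3: "vsmult c u \<in> gsub q k \<delta> a" if hc: "c \<in> Fq q" and hu: "u \<in> gsub q k \<delta> a" for c u
  proof -
    obtain x where "u = (x, polyf q k \<delta> a x)"
      using hu unfolding gsub_polyf by blast
    hence "vsmult c u = (c * x, polyf q k \<delta> a (c * x))" using hc by (simp add: polyf_smult)
    thus ?thesis unfolding gsub_polyf by blast
  qed
  show ?thesis unfolding fq_subspace_def using 1 2 3 by blast
qed

lemma gsub_zero: "(0, y) \<in> gsub q k \<delta> (a::nat\<Rightarrow>'a) \<Longrightarrow> y = 0"
  unfolding gsub_polyf using polyf_0[of \<delta> a] by auto

lemma tr_adj: "tr (polyf q k \<delta> a x * b) = tr ((x::'a) * adj q k \<delta> a b)"
proof -
  have "tr (polyf q k \<delta> a x * b) = (\<Sum>i\<le>k-\<delta>. tr ((a i * b) * x ^ (q^i)))"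
    unfolding polyf_def sum_distrib_right tr_sum by (intro sum.cong refl) (simp add: mult_ac)
  also have "\<dots> = (\<Sum>i\<le>k-\<delta>. tr (x * (a i * b) ^ (q^(k-i))))"
  proof (intro sum.cong refl)
    fix i assume "i \<in> {..k-\<delta>}"
    hence ik: "i + (k - i) = k" by auto
    have "tr ((a i * b) * x ^ (q^i)) = tr (((a i * b) * x ^ (q^i)) ^ (q^(k-i)))"
      by (rule tr_frob[symmetric])
    also have "\<dots> = tr (x * (a i * b) ^ (q^(k-i)))"
      by (simp only: power_mult_distrib pow_pow ik pow_card mult.commute)
    finally show "tr ((a i * b) * x ^ (q^i)) = tr (x * (a i * b) ^ (q^(k-i)))" .
  qed
  also have "\<dots> = tr (x * adj q k \<delta> a b)"
    by (simp add: adj_def sum_distrib_left tr_sum)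
  finally show ?thesis .
qed

lemma perp_gsub: "perp q k (gsub q k \<delta> (a::nat\<Rightarrow>'a)) = {(- adj q k \<delta> a b, b) | b. True}"
proof -
  have key: "bform q k (x, polyf q k \<delta> a x) (u, b) = tr (x * (u + adj q k \<delta> a b))" for x u b
    by (simp add: bform_simp tr_add tr_adj distrib_left)
  show ?thesis
  proof (rule Set.set_eqI, rule iffI)
    fix v assume "v \<in> perp q k (gsub q k \<delta> a)"
    then obtain u b where v: "v = (u, b)" and "\<forall>x. tr (x * (u + adj q k \<delta> a b)) = 0"
      by (cases v) (auto simp: perp_def gsub_polyf key)
    hence "u + adj q k \<delta> a b = 0" using nondeg by blast
    hence "u = - adj q k \<delta> a b" by (simp add: eq_neg_iff_add_eq_0)
    thus "v \<in> {(- adj q k \<delta> a b, b) | b. True}" using v by auto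
  next
    fix v assume "v \<in> {(- adj q k \<delta> a b, b) | b. True}"
    thus "v \<in> perp q k (gsub q k \<delta> a)"
      by (auto simp: perp_def gsub_polyf key tr_0)
  qed
qed

lemma gsub_cong: "(\<And>i. i \<le> k - \<delta> \<Longrightarrow> a i = b i) \<Longrightarrow> gsub q k \<delta> a = gsub q k \<delta> b"
  unfolding gsub_def by (metis (no_types, lifting) atMost_iff sum.cong)

lemma phi_perp_gsub:
  assumes "\<delta> \<le> k"
  shows "phi q \<delta> ` perp q k (gsub q k \<delta> (a::nat\<Rightarrow>'a))
     = gsub q k \<delta> (\<lambda>j. a (k - \<delta> - j) ^ (q ^ (\<delta> + j)))"
proof -
  define c where "c = (\<lambda>j. a (k - \<delta> - j) ^ (q ^ (\<delta> + j)))"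
  have adj_eq: "adj q k \<delta> a b = polyf q k \<delta> c (b ^ (q^\<delta>))" for b
  proof -
    have "adj q k \<delta> a b = (\<Sum>j\<le>k-\<delta>. (a (k-\<delta>-j) * b) ^ (q ^ (k - (k-\<delta>-j))))"
      unfolding adj_def by (rule sum_atMost_rev)
    also have "\<dots> = polyf q k \<delta> c (b ^ (q^\<delta>))"
      unfolding polyf_def c_def
    proof (intro sum.cong refl)
      fix j assume "j \<in> {..k-\<delta>}"
      hence e: "k - (k-\<delta>-j) = \<delta> + j" using assms by simp
      show "(a (k-\<delta>-j) * b) ^ (q ^ (k - (k-\<delta>-j))) = a (k-\<delta>-j) ^ (q^(\<delta>+j)) * (b^(q^\<delta>)) ^ (q^j)"
        by (simp only: e power_mult_distrib pow_pow)
    qed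
    finally show ?thesis .
  qed
  have "phi q \<delta> ` perp q k (gsub q k \<delta> a) = gsub q k \<delta> c"
    unfolding perp_gsub unfolding gsub_polyf
  proof (rule Set.set_eqI, rule iffI)
    fix v assume "v \<in> phi q \<delta> ` {(- adj q k \<delta> a b, b) | b. True}"
    then obtain b where "v = phi q \<delta> (- adj q k \<delta> a b, b)" by auto
    thus "v \<in> {(x, polyf q k \<delta> c x) | x. True}" by (auto simp: phi_def adj_eq)
  next
    fix v assume "v \<in> {(x, polyf q k \<delta> c x) | x. True}"
    then obtain y where v: "v = (y, polyf q k \<delta> c y)" by auto
    obtain b where b: "b ^ (q^\<delta>) = y" using frob_surj by blast
    have "v = phi q \<delta> (- adj q k \<delta> a b, b)" using v b by (simp add: phi_def adj_eq)
    thus "v \<in> phi q \<delta> ` {(- adj q k \<delta> a b, b) | b. True}" by blast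
  qed
  thus ?thesis by (simp add: c_def)
qed


lemma phi_bij: "\<delta> \<le> k \<Longrightarrow> bij (phi q \<delta> :: 'a\<times>'a \<Rightarrow> 'a\<times>'a)"
proof -
  assume d: "\<delta> \<le> k"
  define psi :: "'a\<times>'a \<Rightarrow> 'a\<times>'a" where "psi = (\<lambda>v. (- snd v, fst v ^ (q^(k-\<delta>))))"
  have e1: "(k - \<delta>) + \<delta> = k" "\<delta> + (k - \<delta>) = k" using d by auto
  have "phi q \<delta> \<circ> psi = id"
    by (rule ext) (simp add: phi_def psi_def pow_pow e1 pow_card)
  moreover have "psi \<circ> phi q \<delta> = id"
    by (rule ext) (simp add: phi_def psi_def pow_pow e1 pow_card)
  ultimately show ?thesis using o_bij by blast
qed

lemma phi_linear: "fq_linear q (phi q \<delta> :: 'a\<times>'a \<Rightarrow> 'a\<times>'a)"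
  unfolding fq_linear_def
proof (intro conjI allI ballI)
  fix u w :: "'a\<times>'a"
  show "phi q \<delta> (vadd u w) = vadd (phi q \<delta> u) (phi q \<delta> w)"
    by (cases u; cases w) (simp add: phi_def frob_add)
next
  fix c :: 'a and u :: "'a\<times>'a" assume "c \<in> Fq q"
  thus "phi q \<delta> (vsmult c u) = vsmult c (phi q \<delta> u)"
    by (cases u) (simp add: phi_def power_mult_distrib Fq_pow)
qed

lemma part1:
  assumes "\<delta> \<le> k"
  shows "fq_linear q (phi q \<delta> :: 'a\<times>'a \<Rightarrow> 'a\<times>'a) \<and> bij (phi q \<delta> :: 'a\<times>'a \<Rightarrow> 'a\<times>'a)
     \<and> (\<forall>X\<in>(Gcode q k \<delta> :: ('a\<times>'a) set set). phi q \<delta> ` perp q k X \<in> Gcode q k \<delta>)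
     \<and> (\<lambda>X. phi q \<delta> ` perp q k X) ` (Gcode q k \<delta> :: ('a\<times>'a) set set) = Gcode q k \<delta>"
proof (intro conjI phi_linear phi_bij assms)
  show in1: "\<forall>X\<in>(Gcode q k \<delta> :: ('a\<times>'a) set set). phi q \<delta> ` perp q k X \<in> Gcode q k \<delta>"
    using phi_perp_gsub[OF assms] by (auto simp: Gcode_def)
  show "(\<lambda>X. phi q \<delta> ` perp q k X) ` (Gcode q k \<delta> :: ('a\<times>'a) set set) = Gcode q k \<delta>"
  proof (rule Set.set_eqI, rule iffI)
    fix Y assume "Y \<in> (\<lambda>X. phi q \<delta> ` perp q k X) ` (Gcode q k \<delta> :: ('a\<times>'a) set set)"
    thus "Y \<in> Gcode q k \<delta>" using in1 by blast
  next
    fix Y :: "('a\<times>'a) set" assume "Y \<in> Gcode q k \<delta>"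
    then obtain c where Y: "Y = gsub q k \<delta> c" by (auto simp: Gcode_def)
    define a :: "nat \<Rightarrow> 'a" where
      "a = (\<lambda>i. SOME t. t ^ (q ^ (\<delta> + (k - \<delta> - i))) = c (k - \<delta> - i))"
    have "gsub q k \<delta> (\<lambda>j. a (k - \<delta> - j) ^ (q ^ (\<delta> + j))) = gsub q k \<delta> c"
    proof (rule gsub_cong)
      fix j assume j: "j \<le> k - \<delta>"
      hence jj: "k - \<delta> - (k - \<delta> - j) = j" by simp
      have "a (k - \<delta> - j) = (SOME t. t ^ (q ^ (\<delta> + j)) = c j)"
        unfolding a_def jj ..
      moreover have "\<exists>t. t ^ (q ^ (\<delta> + j)) = c j" by (rule frob_surj)
      ultimately show "a (k - \<delta> - j) ^ (q ^ (\<delta> + j)) = c j" by (metis (mono_tags) someI_ex)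
    qed
    hence "Y = phi q \<delta> ` perp q k (gsub q k \<delta> a)" using Y phi_perp_gsub[OF assms] by simp
    moreover have "gsub q k \<delta> a \<in> Gcode q k \<delta>" by (auto simp: Gcode_def)
    ultimately show "Y \<in> (\<lambda>X. phi q \<delta> ` perp q k X) ` Gcode q k \<delta>" by blast
  qed
qed


lemma Fq_m1: "(-1::'a) \<in> Fq q" using Fq_neg[OF Fq_1] .

lemma sub_diff: "fq_subspace q U \<Longrightarrow> u \<in> U \<Longrightarrow> w \<in> U \<Longrightarrow> vadd u (vsmult (-1) w) \<in> (U::('a\<times>'a) set)"
  unfolding fq_subspace_def using Fq_m1 by blast

lemma vext_subspace:
  assumes W: "fq_subspace q (W::('a\<times>'a) set)"
  shows "fq_subspace q (vext q W v)"
proof -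
  have W0: "(0,0) \<in> W" and Wa: "\<And>u w. u \<in> W \<Longrightarrow> w \<in> W \<Longrightarrow> vadd u w \<in> W"
    and Ws: "\<And>c u. c \<in> Fq q \<Longrightarrow> u \<in> W \<Longrightarrow> vsmult c u \<in> W"
    using W unfolding fq_subspace_def by auto
  have 1: "(0,0) \<in> vext q W v"
    unfolding vext_def using W0 Fq_0 by (cases v) force
  have 2: "vadd x y \<in> vext q W v" if hx: "x \<in> vext q W v" and hy: "y \<in> vext q W v" for x y
  proof -
    obtain w1 c1 where x: "x = vadd w1 (vsmult c1 v)" "w1 \<in> W" "c1 \<in> Fq q" using hx unfolding vext_def by blast
    obtain w2 c2 where y: "y = vadd w2 (vsmult c2 v)" "w2 \<in> W" "c2 \<in> Fq q" using hy unfolding vext_def by blast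
    have "vadd x y = vadd (vadd w1 w2) (vsmult (c1 + c2) v)"
      using x y by (cases v; cases w1; cases w2) (simp add: algebra_simps)
    moreover have "vadd w1 w2 \<in> W" using Wa x y by blast
    moreover have "c1 + c2 \<in> Fq q" using Fq_add x y by blast
    ultimately show ?thesis unfolding vext_def by blast
  qed
  have 3: "vsmult d x \<in> vext q W v" if hd: "d \<in> Fq q" and hx: "x \<in> vext q W v" for d x
  proof -
    obtain w1 c1 where x: "x = vadd w1 (vsmult c1 v)" "w1 \<in> W" "c1 \<in> Fq q" using hx unfolding vext_def by blast
    have "vsmult d x = vadd (vsmult d w1) (vsmult (d * c1) v)"
      using x by (cases v; cases w1) (simp add: algebra_simps)
    moreover have "vsmult d w1 \<in> W" using Ws x hd by blast
    moreover have "d * c1 \<in> Fq q" using Fq_mult x hd by blast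
    ultimately show ?thesis unfolding vext_def by blast
  qed
  show ?thesis unfolding fq_subspace_def using 1 2 3 by blast
qed

lemma vext_sup: "W \<subseteq> vext q (W::('a\<times>'a) set) v"
proof
  fix w assume "w \<in> W"
  moreover have "w = vadd w (vsmult 0 v)" by (cases w; cases v) simp
  ultimately show "w \<in> vext q W v" unfolding vext_def using Fq_0 by blast
qed

lemma vext_v: "fq_subspace q W \<Longrightarrow> v \<in> vext q (W::('a\<times>'a) set) v"
proof -
  assume "fq_subspace q W"
  hence "(0,0) \<in> W" by (simp add: fq_subspace_def)
  moreover have "v = vadd (0,0) (vsmult 1 v)" by (cases v) simp
  ultimately show ?thesis unfolding vext_def using Fq_1 by blast
qed

lemma vext_within: "fq_subspace q U \<Longrightarrow> W \<subseteq> U \<Longrightarrow> v \<in> U \<Longrightarrow> vext q (W::('a\<times>'a) set) v \<subseteq> U"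
  unfolding vext_def fq_subspace_def by blast

lemma card_vext:
  assumes W: "fq_subspace q (W::('a\<times>'a) set)" and v: "v \<notin> W"
  shows "card (vext q W v) = card (Fq q :: 'a set) * card W"
proof -
  have "vext q W v = (\<lambda>(w, c). vadd w (vsmult c v)) ` (W \<times> Fq q)"
    unfolding vext_def by auto
  moreover have "inj_on (\<lambda>(w, c). vadd w (vsmult c v)) (W \<times> Fq q)"
  proof (rule inj_onI)
    fix x y assume hx: "x \<in> W \<times> Fq q" and hy: "y \<in> W \<times> Fq q"
      and hxy: "(\<lambda>(w, c). vadd w (vsmult c v)) x = (\<lambda>(w, c). vadd w (vsmult c v)) y"
    obtain w1 c1 where x: "x = (w1, c1)" by (cases x)
    obtain w2 c2 where y: "y = (w2, c2)" by (cases y)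
    have h: "w1 \<in> W" "c1 \<in> Fq q" "w2 \<in> W" "c2 \<in> Fq q" using hx hy x y by auto
    have eq: "vadd w1 (vsmult c1 v) = vadd w2 (vsmult c2 v)" using hxy x y by simp
    have "c1 = c2"
    proof (rule ccontr)
      assume ne: "c1 \<noteq> c2"
      have "vadd w2 (vsmult (-1) w1) \<in> W" using sub_diff[OF W h(3) h(1)] .
      hence "vsmult (inverse (c1 - c2)) (vadd w2 (vsmult (-1) w1)) \<in> W"
        using W Fq_inv[OF Fq_diff[OF h(2) h(4)]] unfolding fq_subspace_def by blast
      moreover have "vsmult (inverse (c1 - c2)) (vadd w2 (vsmult (-1) w1)) = v"
        using eq ne by (cases v; cases w1; cases w2) (auto simp: field_simps)
      ultimately show False using v by simp
    qed
    hence "w1 = w2" using eq by (cases v; cases w1; cases w2) auto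
    thus "x = y" using x y \<open>c1 = c2\<close> by simp
  qed
  ultimately show ?thesis
    by (simp add: card_image card_cartesian_product mult.commute)
qed

lemma perp_vext: "fq_subspace q W \<Longrightarrow>
   perp q k (vext q (W::('a\<times>'a) set) v) = perp q k W \<inter> {u. bform q k v u = 0}"
proof (rule Set.set_eqI, rule iffI)
  fix u assume W: "fq_subspace q W" and "u \<in> perp q k (vext q W v)"
  thus "u \<in> perp q k W \<inter> {u. bform q k v u = 0}"
    using vext_sup[of W v] vext_v[OF W, of v] by (auto simp: perp_def)
next
  fix u assume W: "fq_subspace q W" and "u \<in> perp q k W \<inter> {u. bform q k v u = 0}"
  thus "u \<in> perp q k (vext q W v)"
    by (auto simp: perp_def vext_def bform_add1 bform_smult1)
qed

lemma perp_UNIV: "perp q k (UNIV::('a\<times>'a) set) = {(0,0)}"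
proof (rule Set.set_eqI, rule iffI)
  fix u :: "'a\<times>'a" assume "u \<in> perp q k UNIV"
  hence h: "\<And>x. bform q k x u = 0" by (auto simp: perp_def)
  obtain a b where u: "u = (a, b)" by (cases u)
  have "\<forall>x. tr (x * a) = 0" using h[of "(x, 0)" for x] u by (simp add: bform_simp)
  hence "a = 0" by (rule nondeg)
  moreover have "\<forall>x. tr (x * b) = 0" using h[of "(0, x)" for x] u by (simp add: bform_simp)
  hence "b = 0" by (rule nondeg)
  ultimately show "u \<in> {(0,0)}" using u by simp
next
  fix u :: "'a\<times>'a" assume "u \<in> {(0,0)}"
  thus "u \<in> perp q k UNIV" by (auto simp: perp_def bform_comm[of _ "(0,0)"] bform_simp tr_0)
qed

lemma perp_zero: "perp q k {(0,0)} = (UNIV::('a\<times>'a) set)"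
  by (auto simp: perp_def bform_simp tr_0)

lemma fiber_count:
  assumes P: "fq_subspace q (P::('a\<times>'a) set)"
  shows "card P \<le> card (Fq q :: 'a set) * card (P \<inter> {u. bform q k v u = 0})"
    and "(\<exists>w\<in>P. bform q k v w \<noteq> 0) \<Longrightarrow>
         card P = card (Fq q :: 'a set) * card (P \<inter> {u. bform q k v u = 0})"
proof -
  define K where "K = P \<inter> {u. bform q k v u = 0}"
  define F where "F = (\<lambda>t. {u \<in> P. bform q k v u = t})"
  have Pu: "P = (\<Union>t\<in>Fq q. F t)" unfolding F_def by (auto intro: bform_Fq)
  have cP: "card P = (\<Sum>t\<in>Fq q. card (F t))"
    unfolding Pu by (rule card_UN_disjoint) (auto simp: F_def)
  have cF: "card (F t) = card K" if "u0 \<in> F t" for t u0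
  proof -
    have u0: "u0 \<in> P" "bform q k v u0 = t" using that by (auto simp: F_def)
    have "F t = (\<lambda>x. vadd u0 x) ` K"
    proof (rule Set.set_eqI, rule iffI)
      fix u assume u: "u \<in> F t"
      have "vadd u (vsmult (-1) u0) \<in> K"
        using sub_diff[OF P _ u0(1), of u] u u0 Fq_m1
        by (auto simp: K_def F_def bform_add2 bform_smult2)
      moreover have "u = vadd u0 (vadd u (vsmult (-1) u0))" by (cases u; cases u0) simp
      ultimately show "u \<in> (\<lambda>x. vadd u0 x) ` K" by blast
    next
      fix u assume "u \<in> (\<lambda>x. vadd u0 x) ` K"
      then obtain x where "x \<in> K" "u = vadd u0 x" by blast
      thus "u \<in> F t" using P u0 unfolding fq_subspace_def by (auto simp: K_def F_def bform_add2)
    qed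
    moreover have "inj_on (\<lambda>x. vadd u0 x) K"
      by (rule inj_onI) (auto simp: vadd_def prod_eq_iff)
    ultimately show ?thesis by (simp add: card_image)
  qed
  have cF': "card (F t) \<le> card K" for t
    by (cases "F t = {}") (auto simp: cF)
  have "card P \<le> card (Fq q :: 'a set) * card K" unfolding cP
    using sum_bounded_above[of "Fq q" "\<lambda>t. card (F t)" "card K"] cF' by simp
  thus "card P \<le> card (Fq q :: 'a set) * card (P \<inter> {u. bform q k v u = 0})" by (simp add: K_def)
  assume "\<exists>w\<in>P. bform q k v w \<noteq> 0"
  then obtain w where w: "w \<in> P" "bform q k v w \<noteq> 0" by blast
  have "F t \<noteq> {}" if t: "t \<in> Fq q" for t
  proof -
    define s where "s = t / bform q k v w"
    have s: "s \<in> Fq q" unfolding s_def using t bform_Fq Fq_div by blast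
    have "vsmult s w \<in> P" using P s w unfolding fq_subspace_def by blast
    moreover have "bform q k v (vsmult s w) = t" using w s by (simp add: bform_smult2 s_def)
    ultimately show ?thesis unfolding F_def by blast
  qed
  hence "card (F t) = card K" if "t \<in> Fq q" for t using cF that by blast
  hence "card P = (\<Sum>t\<in>(Fq q::'a set). card K)" unfolding cP by simp
  thus "card P = card (Fq q :: 'a set) * card (P \<inter> {u. bform q k v u = 0})" by (simp add: K_def)
qed

lemma up_bound: "fq_subspace q (W::('a\<times>'a) set) \<Longrightarrow> card W * card (perp q k W) \<le> card (UNIV::('a\<times>'a) set)"
proof (induction "card (UNIV::('a\<times>'a) set) - card W" arbitrary: W rule: less_induct)
  case less
  show ?case
  proof (cases "W = UNIV")
    case True
    thus ?thesis by (simp add: perp_UNIV)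
  next
    case False
    then obtain v where v: "v \<notin> W" by blast
    define W' where "W' = vext q W v"
    have W': "fq_subspace q W'" unfolding W'_def by (rule vext_subspace) fact
    have "W \<subset> W'" unfolding W'_def using vext_sup vext_v[OF less.prems] v by blast
    hence "card W < card W'" by (intro psubset_card_mono) auto
    moreover have "card W' \<le> card (UNIV::('a\<times>'a) set)" by (rule card_mono) auto
    ultimately have IH: "card W' * card (perp q k W') \<le> card (UNIV::('a\<times>'a) set)"
      using less.hyps W' by simp
    have cW': "card W' = card (Fq q :: 'a set) * card W" unfolding W'_def by (rule card_vext) fact+
    have "card (perp q k W) \<le> card (Fq q :: 'a set) * card (perp q k W')"
      using fiber_count(1)[OF perp_subspace, of W v] perp_vext[OF less.prems, of v]
      by (simp add: W'_def)
    hence "card W * card (perp q k W) \<le> card W * (card (Fq q :: 'a set) * card (perp q k W'))"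
      by simp
    also have "\<dots> = card W' * card (perp q k W')" by (simp add: cW')
    finally show ?thesis using IH by linarith
  qed
qed


lemma low_aux:
  assumes U: "fq_subspace q (U::('a\<times>'a) set)"
  shows "finite S \<Longrightarrow> S \<subseteq> U \<Longrightarrow> \<exists>W. fq_subspace q W \<and> S \<subseteq> W \<and> W \<subseteq> U
     \<and> card (UNIV::('a\<times>'a) set) \<le> card W * card (perp q k W) \<and> perp q k (perp q k W) = W"
proof (induction S rule: finite_induct)
  case empty
  have "fq_subspace q {(0::'a,0::'a)}" by (auto simp: fq_subspace_def)
  moreover have "{(0,0)} \<subseteq> U" using U by (simp add: fq_subspace_def)
  ultimately show ?case
    by (intro exI[of _ "{(0,0)}"]) (simp add: perp_zero perp_UNIV)
next
  case (insert v S)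
  then obtain W where W: "fq_subspace q W" "S \<subseteq> W" "W \<subseteq> U"
    "card (UNIV::('a\<times>'a) set) \<le> card W * card (perp q k W)" "perp q k (perp q k W) = W"
    by auto
  show ?case
  proof (cases "v \<in> W")
    case True
    thus ?thesis using W by (intro exI[of _ W]) auto
  next
    case False
    define W' where "W' = vext q W v"
    have W': "fq_subspace q W'" unfolding W'_def by (rule vext_subspace) fact
    have sub: "insert v S \<subseteq> W'" unfolding W'_def using vext_sup[of W v] vext_v[OF W(1)] W(2) by blast
    have within: "W' \<subseteq> U" unfolding W'_def using vext_within[OF U W(3)] insert.prems by blast
    have "v \<notin> perp q k (perp q k W)" using False W(5) by simp
    then obtain u where u: "u \<in> perp q k W" "bform q k u v \<noteq> 0" by (auto simp: perp_def)
    hence "\<exists>w\<in>perp q k W. bform q k v w \<noteq> 0" using bform_comm by metis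
    hence cp: "card (perp q k W) = card (Fq q :: 'a set) * card (perp q k W')"
      using fiber_count(2)[OF perp_subspace, of W v] perp_vext[OF W(1), of v] by (simp add: W'_def)
    have cW': "card W' = card (Fq q :: 'a set) * card W" unfolding W'_def by (rule card_vext) fact+
    have low: "card (UNIV::('a\<times>'a) set) \<le> card W' * card (perp q k W')"
      using W(4) cp cW' by (simp add: mult_ac)
    have up: "card (perp q k W') * card (perp q k (perp q k W')) \<le> card (UNIV::('a\<times>'a) set)"
      by (rule up_bound[OF perp_subspace])
    have pos: "card (perp q k W') > 0"
      using perp_subspace[of W'] by (auto simp: fq_subspace_def card_gt_0_iff)
    have "card (perp q k W') * card (perp q k (perp q k W')) \<le> card (perp q k W') * card W'"
      using le_trans[OF up low] by (simp add: mult.commute)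
    hence "card (perp q k (perp q k W')) \<le> card W'" using pos by simp
    moreover have sup: "W' \<subseteq> perp q k (perp q k W')" by (rule perp_perp_sup)
    moreover have "card W' \<le> card (perp q k (perp q k W'))" by (rule card_mono[OF _ sup]) simp
    ultimately have "card W' = card (perp q k (perp q k W'))" by simp
    hence pp: "perp q k (perp q k W') = W'"
      using card_subset_eq[OF _ sup] by simp
    show ?thesis using W' sub within low pp by blast
  qed
qed

lemma perp_perp: "fq_subspace q (U::('a\<times>'a) set) \<Longrightarrow> perp q k (perp q k U) = U"
  using low_aux[of U U] by auto

lemma phi_0: "phi q \<delta> (0::'a,0::'a) = (0,0)" using q_ge2 by (simp add: phi_def power_0_left)

lemma phi_add: "phi q \<delta> (vadd u w) = vadd (phi q \<delta> u) (phi q \<delta> (w::'a\<times>'a))"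
  using phi_linear unfolding fq_linear_def by blast

lemma phi_smult: "c \<in> Fq q \<Longrightarrow> phi q \<delta> (vsmult c u) = vsmult c (phi q \<delta> (u::'a\<times>'a))"
  using phi_linear unfolding fq_linear_def by blast

lemma phi_image_subspace:
  assumes U: "fq_subspace q (U::('a\<times>'a) set)" shows "fq_subspace q (phi q \<delta> ` U)"
proof -
  have U0: "(0,0) \<in> U" and Ua: "\<And>u w. u \<in> U \<Longrightarrow> w \<in> U \<Longrightarrow> vadd u w \<in> U"
    and Us: "\<And>c u. c \<in> Fq q \<Longrightarrow> u \<in> U \<Longrightarrow> vsmult c u \<in> U"
    using U unfolding fq_subspace_def by auto
  have 1: "(0,0) \<in> phi q \<delta> ` U" using U0 phi_0[symmetric] by blast
  have 2: "vadd x y \<in> phi q \<delta> ` U" if hx: "x \<in> phi q \<delta> ` U" and hy: "y \<in> phi q \<delta> ` U" for x y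
  proof -
    obtain u where "u \<in> U" "x = phi q \<delta> u" using hx by blast
    moreover obtain w where "w \<in> U" "y = phi q \<delta> w" using hy by blast
    ultimately have "vadd x y = phi q \<delta> (vadd u w)" "vadd u w \<in> U" using Ua phi_add by auto
    thus ?thesis by blast
  qed
  have 3: "vsmult c x \<in> phi q \<delta> ` U" if hc: "c \<in> Fq q" and hx: "x \<in> phi q \<delta> ` U" for c x
  proof -
    obtain u where "u \<in> U" "x = phi q \<delta> u" using hx by blast
    hence "vsmult c x = phi q \<delta> (vsmult c u)" "vsmult c u \<in> U" using Us phi_smult hc by auto
    thus ?thesis by blast
  qed
  show ?thesis unfolding fq_subspace_def using 1 2 3 by blast
qed

lemma phi_vimage_subspace:
  assumes T: "fq_subspace q (T::('a\<times>'a) set)" shows "fq_subspace q (phi q \<delta> -` T)"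
proof -
  have T0: "(0,0) \<in> T" and Ta: "\<And>u w. u \<in> T \<Longrightarrow> w \<in> T \<Longrightarrow> vadd u w \<in> T"
    and Ts: "\<And>c u. c \<in> Fq q \<Longrightarrow> u \<in> T \<Longrightarrow> vsmult c u \<in> T"
    using T unfolding fq_subspace_def by auto
  have 1: "(0,0) \<in> phi q \<delta> -` T" using T0 phi_0 by simp
  have 2: "vadd x y \<in> phi q \<delta> -` T" if "x \<in> phi q \<delta> -` T" "y \<in> phi q \<delta> -` T" for x y
    using that Ta[of "phi q \<delta> x" "phi q \<delta> y"] phi_add[where u=x and w=y] by simp
  have 3: "vsmult c x \<in> phi q \<delta> -` T" if "c \<in> Fq q" "x \<in> phi q \<delta> -` T" for c x
    using that Ts[of c "phi q \<delta> x"] phi_smult[where c=c and u=x] by simp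
  show ?thesis unfolding fq_subspace_def using 1 2 3 by blast
qed

lemma part2:
  assumes "\<delta> \<le> k"
  shows "correlation q (\<lambda>U. phi q \<delta> ` perp q k U :: ('a\<times>'a) set)"
proof -
  let ?c = "\<lambda>U. phi q \<delta> ` perp q k U :: ('a\<times>'a) set"
  have injphi: "inj (phi q \<delta> :: 'a\<times>'a \<Rightarrow> 'a\<times>'a)" and surjphi: "surj (phi q \<delta> :: 'a\<times>'a \<Rightarrow> 'a\<times>'a)"
    using phi_bij[OF assms] bij_is_inj bij_is_surj by auto
  have inj: "inj_on ?c (subspaces q)"
  proof (rule inj_onI)
    fix U W assume U: "U \<in> subspaces q" and W: "W \<in> subspaces q" and e: "?c U = ?c W"
    hence "perp q k U = perp q k W" using injphi by (simp add: inj_image_eq_iff)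
    hence "perp q k (perp q k U) = perp q k (perp q k W)" by simp
    thus "U = W" using U W perp_perp by (simp add: subspaces_def)
  qed
  have img: "?c ` subspaces q = subspaces q"
  proof (rule Set.set_eqI, rule iffI)
    fix T assume "T \<in> ?c ` subspaces q"
    thus "T \<in> subspaces q" using phi_image_subspace[OF perp_subspace] by (auto simp: subspaces_def)
  next
    fix T :: "('a\<times>'a) set" assume T: "T \<in> subspaces q"
    define U where "U = perp q k (phi q \<delta> -` T)"
    have "perp q k U = phi q \<delta> -` T" unfolding U_def
      using perp_perp[OF phi_vimage_subspace] T by (simp add: subspaces_def)
    hence "?c U = T" using surjphi by (simp add: surj_image_vimage_eq)
    moreover have "U \<in> subspaces q" unfolding U_def by (simp add: subspaces_def perp_subspace)
    ultimately show "T \<in> ?c ` subspaces q" by blast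
  qed
  have ord: "U \<subseteq> W \<longleftrightarrow> ?c W \<subseteq> ?c U" if "U \<in> subspaces q" "W \<in> subspaces q" for U W
  proof -
    have "?c W \<subseteq> ?c U \<longleftrightarrow> perp q k W \<subseteq> perp q k U" using injphi by (simp add: inj_image_subset_iff)
    also have "\<dots> \<longleftrightarrow> U \<subseteq> W"
    proof
      assume "perp q k W \<subseteq> perp q k U"
      hence "perp q k (perp q k U) \<subseteq> perp q k (perp q k W)" by (rule perp_antimono)
      thus "U \<subseteq> W" using that perp_perp by (simp add: subspaces_def)
    qed (rule perp_antimono)
    finally show ?thesis by simp
  qed
  have bb: "bij_betw ?c (subspaces q) (subspaces q)" unfolding bij_betw_def using inj img by blast
  show ?thesis unfolding correlation_def
  proof (intro conjI ballI bb)
    fix U W :: "('a\<times>'a) set" assume "U \<in> subspaces q" "W \<in> subspaces q"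
    thus "U \<subseteq> W \<longleftrightarrow> ?c W \<subseteq> ?c U" by (rule ord)
  qed
qed


lemma S_subspace: "fq_subspace q ({0} \<times> (UNIV::'a set))"
  by (auto simp: fq_subspace_def vadd_def vsmult_def)

lemma G_subspaces: "(Gcode q k \<delta> :: ('a\<times>'a) set set) \<subseteq> subspaces q"
  by (auto simp: Gcode_def subspaces_def gsub_subspace)

lemma sub_inter: "fq_subspace q A \<Longrightarrow> fq_subspace q B \<Longrightarrow> fq_subspace q (A \<inter> (B::('a\<times>'a) set))"
  unfolding fq_subspace_def by blast

lemma A_S: "isA (subspaces q) (Gcode q k \<delta>) ({0} \<times> (UNIV::'a set))"
  unfolding isA_def
proof (intro ballI impI)
  fix X Z Z' :: "('a\<times>'a) set"
  assume X: "X \<in> Gcode q k \<delta>" and Z: "Z \<in> subspaces q" and h1: "Z \<subseteq> {0} \<times> UNIV" and h2: "Z \<subseteq> X"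
    and Z': "Z' \<in> subspaces q"
  obtain a where a: "X = gsub q k \<delta> a" using X by (auto simp: Gcode_def)
  have "Z \<subseteq> {(0,0)}"
  proof
    fix z assume "z \<in> Z"
    then obtain y where z: "z = (0, y)" "(0, y) \<in> X" using h1 h2 by auto
    hence "y = 0" using gsub_zero a by blast
    thus "z \<in> {(0,0)}" using z by simp
  qed
  moreover have "(0,0) \<in> Z'" using Z' by (simp add: subspaces_def fq_subspace_def)
  ultimately show "Z \<subseteq> Z'" by blast
qed

lemma max_A: "W \<in> subspaces q \<Longrightarrow> isA (subspaces q) (Gcode q k \<delta>) W \<Longrightarrow> W \<subseteq> {0} \<times> (UNIV::'a set)"
proof
  fix w assume W: "W \<in> subspaces q" and AW: "isA (subspaces q) (Gcode q k \<delta>) W" and w: "w \<in> W"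
  obtain x y where xy: "w = (x, y)" by (cases w)
  show "w \<in> {0} \<times> UNIV"
  proof (rule ccontr)
    assume "w \<notin> {0} \<times> UNIV"
    hence x: "x \<noteq> 0" using xy by simp
    define X where "X = gsub q k \<delta> (\<lambda>i. if i = 0 then y / x else (0::'a))"
    have XG: "X \<in> Gcode q k \<delta>" unfolding X_def Gcode_def by blast
    have "polyf q k \<delta> (\<lambda>i. if i = 0 then y / x else 0) x = y"
    proof -
      have "polyf q k \<delta> (\<lambda>i. if i = 0 then y / x else 0) x = (\<Sum>i\<le>k-\<delta>. if i = 0 then y / x * x else 0)"
        unfolding polyf_def by (intro sum.cong refl) simp
      also have "\<dots> = y / x * x" by simp
      finally show ?thesis using x by simp
    qed
    hence "w = (x, polyf q k \<delta> (\<lambda>i. if i = 0 then y / x else 0) x)" using xy by simp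
    hence wX: "w \<in> X" unfolding X_def gsub_polyf by blast
    have ZS: "W \<inter> X \<in> subspaces q"
      using W sub_inter[OF _ gsub_subspace] unfolding X_def subspaces_def by simp
    have "(0::'a,0::'a) = (0,0)" ..
    have z0: "{(0::'a,0::'a)} \<in> subspaces q" by (auto simp: subspaces_def fq_subspace_def)
    have "W \<inter> X \<subseteq> {(0,0)}"
      using AW[unfolded isA_def, rule_format, OF XG ZS Int_lower1 Int_lower2 z0] .
    hence "w = (0,0)" using w wX by blast
    thus False using xy x by simp
  qed
qed

lemma phi_perp_S: "phi q \<delta> ` perp q k ({0} \<times> UNIV) = {0} \<times> (UNIV::'a set)"
proof -
  have "perp q k ({0} \<times> UNIV) = (UNIV::'a set) \<times> {0}"
  proof (rule Set.set_eqI, rule iffI)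
    fix u :: "'a\<times>'a" assume "u \<in> perp q k ({0} \<times> UNIV)"
    hence h: "\<And>y. bform q k (0, y) u = 0" by (auto simp: perp_def)
    obtain a b where u: "u = (a, b)" by (cases u)
    have "\<forall>y. tr (y * b) = 0" using h u by (simp add: bform_simp)
    hence "b = 0" by (rule nondeg)
    thus "u \<in> UNIV \<times> {0}" using u by simp
  next
    fix u :: "'a\<times>'a" assume "u \<in> UNIV \<times> {0}"
    thus "u \<in> perp q k ({0} \<times> UNIV)" by (auto simp: perp_def bform_simp tr_0)
  qed
  moreover have "phi q \<delta> ` ((UNIV::'a set) \<times> {0}) = {0} \<times> UNIV"
  proof (rule Set.set_eqI, rule iffI)
    fix v assume "v \<in> phi q \<delta> ` ((UNIV::'a set) \<times> {0})"
    thus "v \<in> {0} \<times> UNIV" using q_ge2 by (auto simp: phi_def power_0_left)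
  next
    fix v :: "'a\<times>'a" assume "v \<in> {0} \<times> UNIV"
    then obtain y where v: "v = (0, y)" by auto
    have "v = phi q \<delta> (-y, 0)" using v q_ge2 by (simp add: phi_def power_0_left)
    thus "v \<in> phi q \<delta> ` ((UNIV::'a set) \<times> {0})" by blast
  qed
  ultimately show ?thesis by simp
qed

lemma corr_bij: "correlation q c \<Longrightarrow> bij_betw c (subspaces q) (subspaces q)"
  unfolding correlation_def by blast
lemma corr_ord: "correlation q c \<Longrightarrow> U \<in> subspaces q \<Longrightarrow> W \<in> subspaces q \<Longrightarrow> U \<subseteq> W \<longleftrightarrow> c W \<subseteq> c U"
  unfolding correlation_def by blast

lemma part3:
  assumes d: "\<delta> \<le> k"
  shows "\<forall>c. correlation q c \<and> c ` (Gcode q k \<delta> :: ('a \<times> 'a) set set) = Gcode q k \<delta>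
              \<longrightarrow> c ({0} \<times> UNIV) = {0} \<times> UNIV"
proof (intro allI impI)
  let ?S = "{0} \<times> (UNIV::'a set)"
  let ?G = "Gcode q k \<delta> :: ('a \<times> 'a) set set"
  have Sin: "?S \<in> subspaces q" using S_subspace by (simp add: subspaces_def)
  let ?c0 = "\<lambda>U. phi q \<delta> ` perp q k U :: ('a\<times>'a) set"
  have c0: "correlation q ?c0" by (rule part2[OF d])
  have c0G: "?c0 ` ?G = ?G" using part1[OF d] by (elim conjE)
  have maxA': "\<And>W. W \<in> subspaces q \<Longrightarrow> isA (subspaces q) ?G W \<Longrightarrow> W \<subseteq> ?S" by (rule max_A)
  have AS': "isA (subspaces q) ?G ?S" by (rule A_S)
  have GS: "?G \<subseteq> subspaces q" by (rule G_subspaces)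
  have bij0: "bij_betw ?c0 (subspaces q) (subspaces q)" by (rule corr_bij[OF c0])
  have ord0: "\<And>U W. U \<in> subspaces q \<Longrightarrow> W \<in> subspaces q \<Longrightarrow> U \<subseteq> W \<longleftrightarrow> ?c0 W \<subseteq> ?c0 U"
    by (rule corr_ord[OF c0])
  have e0: "?c0 ?S = ?S" by (rule phi_perp_S)
  have leastS0: "\<And>W. W \<in> subspaces q \<Longrightarrow> isB (subspaces q) ?G W \<Longrightarrow> ?c0 ?S \<subseteq> W"
    by (rule corr_least(2)[OF bij0 ord0 GS c0G Sin AS' maxA'])
  have BS0: "isB (subspaces q) ?G (?c0 ?S)"
    by (rule corr_least(1)[OF bij0 ord0 GS c0G Sin AS' maxA'])
  fix c assume c: "correlation q c \<and> c ` ?G = ?G"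
  have cc: "correlation q c" and cG: "c ` ?G = ?G" using c by auto
  have bij1: "bij_betw c (subspaces q) (subspaces q)" by (rule corr_bij[OF cc])
  have ord1: "\<And>U W. U \<in> subspaces q \<Longrightarrow> W \<in> subspaces q \<Longrightarrow> U \<subseteq> W \<longleftrightarrow> c W \<subseteq> c U"
    by (rule corr_ord[OF cc])
  have B1: "isB (subspaces q) ?G (c ?S)"
    by (rule corr_least(1)[OF bij1 ord1 GS cG Sin AS' maxA'])
  have l1: "\<And>W. W \<in> subspaces q \<Longrightarrow> isB (subspaces q) ?G W \<Longrightarrow> c ?S \<subseteq> W"
    by (rule corr_least(2)[OF bij1 ord1 GS cG Sin AS' maxA'])
  have cSin: "c ?S \<in> subspaces q" using bij_betw_apply[OF bij1 Sin] .
  have "c ?S \<subseteq> ?S" using l1[OF Sin] BS0 e0 by simp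
  moreover have "?S \<subseteq> c ?S" using leastS0[OF cSin B1] e0 by simp
  ultimately show "c ?S = ?S" by blast
qed
end

theorem mainTheorem7:
  fixes q k \<delta> :: nat
  assumes "\<exists>p m. prime p \<and> m > 0 \<and> q = p ^ m"
    and "card (UNIV :: 'a::{finite,field} set) = q ^ k"
    and "1 \<le> \<delta>" and "\<delta> \<le> k"
  shows "(\<exists>\<phi> :: 'a \<times> 'a \<Rightarrow> 'a \<times> 'a. fq_linear q \<phi> \<and> bij \<phi>
            \<and> (\<forall>X\<in>Gcode q k \<delta>. \<phi> ` perp q k X \<in> Gcode q k \<delta>)
            \<and> (\<lambda>X. \<phi> ` perp q k X) ` Gcode q k \<delta> = Gcode q k \<delta>)
       \<and> (\<exists>c. correlation q c \<and> c ` (Gcode q k \<delta> :: ('a \<times> 'a) set set) = Gcode q k \<delta>)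
       \<and> (\<forall>c. correlation q c \<and> c ` (Gcode q k \<delta> :: ('a \<times> 'a) set set) = Gcode q k \<delta>
              \<longrightarrow> c ({0} \<times> UNIV) = {0} \<times> UNIV)"
proof -
  obtain p m where pm: "prime p" "m > 0" "q = p ^ m" using assms(1) by blast
  have k: "k \<ge> 1" using assms(3,4) by simp
  have P1: "fq_linear q (phi q \<delta> :: 'a\<times>'a \<Rightarrow> 'a\<times>'a) \<and> bij (phi q \<delta> :: 'a\<times>'a \<Rightarrow> 'a\<times>'a)
     \<and> (\<forall>X\<in>(Gcode q k \<delta> :: ('a\<times>'a) set set). phi q \<delta> ` perp q k X \<in> Gcode q k \<delta>)
     \<and> (\<lambda>X. phi q \<delta> ` perp q k X) ` (Gcode q k \<delta> :: ('a\<times>'a) set set) = Gcode q k \<delta>"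
    by (rule part1[OF pm assms(2) k assms(4)])
  have P2: "correlation q (\<lambda>U. phi q \<delta> ` perp q k U :: ('a\<times>'a) set)"
    by (rule part2[OF pm assms(2) k assms(4)])
  have P3: "\<forall>c. correlation q c \<and> c ` (Gcode q k \<delta> :: ('a \<times> 'a) set set) = Gcode q k \<delta>
              \<longrightarrow> c ({0} \<times> UNIV) = {0} \<times> UNIV"
    by (rule part3[OF pm assms(2) k assms(4)])
  show ?thesis
  proof (intro conjI)
    show "\<exists>\<phi> :: 'a \<times> 'a \<Rightarrow> 'a \<times> 'a. fq_linear q \<phi> \<and> bij \<phi>
            \<and> (\<forall>X\<in>Gcode q k \<delta>. \<phi> ` perp q k X \<in> Gcode q k \<delta>)
            \<and> (\<lambda>X. \<phi> ` perp q k X) ` Gcode q k \<delta> = Gcode q k \<delta>"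
      by (rule exI[of _ "phi q \<delta>"]) (rule P1)
    show "\<exists>c. correlation q c \<and> c ` (Gcode q k \<delta> :: ('a \<times> 'a) set set) = Gcode q k \<delta>"
    proof (rule exI[of _ "\<lambda>U. phi q \<delta> ` perp q k U :: ('a\<times>'a) set"], rule conjI)
      show "correlation q (\<lambda>U. phi q \<delta> ` perp q k U :: ('a\<times>'a) set)" by (rule P2)
      show "(\<lambda>U. phi q \<delta> ` perp q k U :: ('a\<times>'a) set) ` Gcode q k \<delta> = Gcode q k \<delta>"
        using P1 by (elim conjE)
    qed
  qed (rule P3)
qed

end
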